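(* Let $v_1,v_2\in L_2(0,1)$, $\alpha\in[0,2\pi)$ and $v=v_1+e^{i\alpha}v_2$. For $w_1,w_2\in L_2(0,1)$ let $A(w_1,w_2,\alpha)$ denote the operator in $L_2(0,1)$ acting by $$A(w_1,w_2,\alpha)\psi(x)=i\psi'(x)+w_1(x)\Big[\psi(0)-\tfrac{i}{2}\langle\psi,w_1\rangle\Big]+w_2(x)\Big[\psi(1)+\tfrac{i}{2}\langle\psi,w_2\rangle\Big]$$ on the domain of $\psi\in W_2^1(0,1)$ with $\psi(1)+i\langle\psi,w_2\rangle=e^{i\alpha}[\psi(0)-i\langle\psi,w_1\rangle]$. Then $A(v_1,v_2,\alpha)$ and $A(v,0,\alpha)$ have the same domain (the domain of the latter being given by $\psi(1)=e^{i\alpha}[\psi(0)-i\langle\psi,v\rangle]$), and their difference is the bounded self-adjoint operator of rank at most $2$ $$\big[A(v_1,v_2,\alpha)-A(v,0,\alpha)\big]\psi=\tfrac{i}{2}e^{-i\alpha}v_1\langle\psi,v_2\rangle-\tfrac{i}{2}e^{i\alpha}v_2\langle\psi,v_1\rangle.$$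
   Context: $\langle f,g\rangle=\int_0^1 f\bar g\,dx$; $W_2^1(0,1)$ is the Sobolev space. *)

theory Defs
  imports "HOL-Analysis.Analysis"
begin

text \<open>Functions on (0,1) are modelled as maps real \<Rightarrow> complex; only values on [0,1] matter.\<close>

definition L2 :: "(real \<Rightarrow> complex) \<Rightarrow> bool" where
  "L2 f \<longleftrightarrow> set_borel_measurable lebesgue {0..1} f \<and>
            set_integrable lebesgue {0..1} (\<lambda>x. (cmod (f x))^2)"

definition ip :: "(real \<Rightarrow> complex) \<Rightarrow> (real \<Rightarrow> complex) \<Rightarrow> complex" where
  "ip f g = (LINT x:{0..1}|lebesgue. f x * cnj (g x))"

definition L2norm :: "(real \<Rightarrow> complex) \<Rightarrow> real" where
  "L2norm f = sqrt (LINT x:{0..1}|lebesgue. (cmod (f x))^2)"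

definition is_wderiv :: "(real \<Rightarrow> complex) \<Rightarrow> (real \<Rightarrow> complex) \<Rightarrow> bool" where
  "is_wderiv \<psi> g \<longleftrightarrow> L2 g \<and> (\<forall>x\<in>{0..1}. \<psi> x = \<psi> 0 + (LINT t:{0..x}|lebesgue. g t))"

text \<open>Sobolev space W_2^1(0,1) (continuous representatives).\<close>
definition W21 :: "(real \<Rightarrow> complex) \<Rightarrow> bool" where
  "W21 \<psi> \<longleftrightarrow> (\<exists>g. is_wderiv \<psi> g)"

definition wderiv :: "(real \<Rightarrow> complex) \<Rightarrow> real \<Rightarrow> complex" where
  "wderiv \<psi> = (SOME g. is_wderiv \<psi> g)"

definition Adom :: "(real \<Rightarrow> complex) \<Rightarrow> (real \<Rightarrow> complex) \<Rightarrow> real \<Rightarrow> (real \<Rightarrow> complex) set" where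
  "Adom w1 w2 \<alpha> = {\<psi>. W21 \<psi> \<and>
      \<psi> 1 + \<i> * ip \<psi> w2 = exp (\<i> * complex_of_real \<alpha>) * (\<psi> 0 - \<i> * ip \<psi> w1)}"

definition Aop :: "(real \<Rightarrow> complex) \<Rightarrow> (real \<Rightarrow> complex) \<Rightarrow> real \<Rightarrow> (real \<Rightarrow> complex) \<Rightarrow> real \<Rightarrow> complex" where
  "Aop w1 w2 \<alpha> \<psi> = (\<lambda>x. \<i> * wderiv \<psi> x
      + w1 x * (\<psi> 0 - \<i> / 2 * ip \<psi> w1)
      + w2 x * (\<psi> 1 + \<i> / 2 * ip \<psi> w2))"

definition bounded_L2op :: "((real \<Rightarrow> complex) \<Rightarrow> real \<Rightarrow> complex) \<Rightarrow> bool" where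
  "bounded_L2op T \<longleftrightarrow>
     (\<forall>\<psi>. L2 \<psi> \<longrightarrow> L2 (T \<psi>)) \<and>
     (\<forall>\<psi> \<phi> a b. L2 \<psi> \<longrightarrow> L2 \<phi> \<longrightarrow>
        (\<forall>x\<in>{0..1}. T (\<lambda>y. a * \<psi> y + b * \<phi> y) x = a * T \<psi> x + b * T \<phi> x)) \<and>
     (\<exists>C. \<forall>\<psi>. L2 \<psi> \<longrightarrow> L2norm (T \<psi>) \<le> C * L2norm \<psi>)"

definition selfadjoint_L2op :: "((real \<Rightarrow> complex) \<Rightarrow> real \<Rightarrow> complex) \<Rightarrow> bool" where
  "selfadjoint_L2op T \<longleftrightarrow> (\<forall>\<psi> \<phi>. L2 \<psi> \<longrightarrow> L2 \<phi> \<longrightarrow> ip (T \<psi>) \<phi> = ip \<psi> (T \<phi>))"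

definition rank_le_L2op :: "((real \<Rightarrow> complex) \<Rightarrow> real \<Rightarrow> complex) \<Rightarrow> nat \<Rightarrow> bool" where
  "rank_le_L2op T n \<longleftrightarrow> (\<exists>fs :: (real \<Rightarrow> complex) list. length fs \<le> n \<and>
     (\<forall>\<psi>. L2 \<psi> \<longrightarrow> (\<exists>cs :: complex list. length cs = length fs \<and>
        (AE x in lebesgue. x \<in> {0..1} \<longrightarrow> T \<psi> x = (\<Sum>i<length fs. cs ! i * (fs ! i) x)))))"

end

theory Submission imports Defs begin

lemma L2_meas: "L2 f \<Longrightarrow> (\<lambda>x. indicator {0..1} x *\<^sub>R f x) \<in> borel_measurable lebesgue"
  by (simp add: L2_def set_borel_measurable_def)

lemma L2_sq: "L2 f \<Longrightarrow> integrable lebesgue (\<lambda>x. indicator {0..1} x *\<^sub>R (cmod (f x))^2)"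
  by (simp add: L2_def set_integrable_def)

lemma ind_split: "indicator A x *\<^sub>R (f x * g x :: complex) = (indicator A x *\<^sub>R f x) * (indicator A x *\<^sub>R g x)"
  by (simp add: indicator_def)

lemma amgm: "cmod a * cmod b \<le> ((cmod a)^2 + (cmod b)^2) / 2"
  using sum_squares_bound[of "cmod a" "cmod b"] by (simp add: algebra_simps)

lemma L2_prod_int:
  assumes "L2 f" "L2 g"
  shows "set_integrable lebesgue {0..1} (\<lambda>x. f x * cnj (g x))"
  unfolding set_integrable_def
proof (rule Bochner_Integration.integrable_bound)
  show "integrable lebesgue (\<lambda>x. indicator {0..1} x *\<^sub>R (((cmod (f x))^2 + (cmod (g x))^2) / 2))"
    using L2_sq[OF assms(1)] L2_sq[OF assms(2)] by (simp add: algebra_simps)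
  have eq: "(\<lambda>x. indicator {0..1} x *\<^sub>R (f x * cnj (g x))) = (\<lambda>x. (indicator {0..1} x *\<^sub>R f x) * cnj (indicator {0..1} x *\<^sub>R g x))"
    by (auto simp: indicator_def)
  have c: "(\<lambda>x. cnj (indicator {0..1} x *\<^sub>R g x)) \<in> borel_measurable lebesgue"
    by (rule borel_measurable_continuous_on[OF continuous_on_cnj[OF continuous_on_id] L2_meas[OF assms(2)]])
  show "(\<lambda>x. indicator {0..1} x *\<^sub>R (f x * cnj (g x))) \<in> borel_measurable lebesgue"
    unfolding eq by (rule borel_measurable_times[OF L2_meas[OF assms(1)] c])
  show "AE x in lebesgue. norm (indicator {0..1} x *\<^sub>R (f x * cnj (g x))) \<le> norm (indicator {0..1} x *\<^sub>R (((cmod (f x))^2 + (cmod (g x))^2) / 2))"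
    using amgm by (auto simp: indicator_def norm_mult)
qed


lemma L2_lin:
  assumes "L2 f" "L2 g"
  shows "L2 (\<lambda>x. a * f x + b * g x)"
proof -
  have eq: "(\<lambda>x. indicator {0..1} x *\<^sub>R (a * f x + b * g x)) = (\<lambda>x. a * (indicator {0..1} x *\<^sub>R f x) + b * (indicator {0..1} x *\<^sub>R g x))"
    by (auto simp: indicator_def)
  have m: "set_borel_measurable lebesgue {0..1} (\<lambda>x. a * f x + b * g x)"
    unfolding set_borel_measurable_def eq by (intro borel_measurable_add borel_measurable_times borel_measurable_const L2_meas assms)
  have i: "integrable lebesgue (\<lambda>x. indicator {0..1} x *\<^sub>R (cmod (a * f x + b * g x))^2)"
  proof (rule Bochner_Integration.integrable_bound)
    show "integrable lebesgue (\<lambda>x. 2 * (cmod a)^2 * (indicator {0..1} x *\<^sub>R (cmod (f x))^2) + 2 * (cmod b)^2 * (indicator {0..1} x *\<^sub>R (cmod (g x))^2))"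
      using L2_sq[OF assms(1)] L2_sq[OF assms(2)] by simp
    have eq2: "(\<lambda>x. indicator {0..1} x *\<^sub>R (cmod (a * f x + b * g x))^2) = (\<lambda>x. (cmod (indicator {0..1} x *\<^sub>R (a * f x + b * g x)))^2)"
      by (auto simp: indicator_def)
    show "(\<lambda>x. indicator {0..1} x *\<^sub>R (cmod (a * f x + b * g x))^2) \<in> borel_measurable lebesgue"
      unfolding eq2 by (rule borel_measurable_power[OF measurable_compose[OF m[unfolded set_borel_measurable_def] borel_measurable_norm]])
    have pt: "(cmod (u + w))^2 \<le> 2 * (cmod u)^2 + 2 * (cmod w)^2" for u w :: complex
    proof -
      have "cmod (u + w) \<le> cmod u + cmod w" by (rule norm_triangle_ineq)
      then have "(cmod (u + w))^2 \<le> (cmod u + cmod w)^2" by (simp add: power_mono)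
      also have "\<dots> \<le> 2 * (cmod u)^2 + 2 * (cmod w)^2"
        using sum_squares_bound[of "cmod u" "cmod w"] by (simp add: power2_eq_square algebra_simps)
      finally show ?thesis .
    qed
    show "AE x in lebesgue. norm (indicator {0..1} x *\<^sub>R (cmod (a * f x + b * g x))^2) \<le> norm (2 * (cmod a)^2 * (indicator {0..1} x *\<^sub>R (cmod (f x))^2) + 2 * (cmod b)^2 * (indicator {0..1} x *\<^sub>R (cmod (g x))^2))"
    proof (rule AE_I2)
      fix x
      show "norm (indicator {0..1} x *\<^sub>R (cmod (a * f x + b * g x))^2) \<le> norm (2 * (cmod a)^2 * (indicator {0..1} x *\<^sub>R (cmod (f x))^2) + 2 * (cmod b)^2 * (indicator {0..1} x *\<^sub>R (cmod (g x))^2))"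
        using pt[of "a * f x" "b * g x"] by (cases "x \<in> {0..1}") (simp_all add: norm_mult power_mult_distrib)
    qed
  qed
  show ?thesis using m i unfolding L2_def set_integrable_def by simp
qed

lemma ip_lin1:
  assumes "L2 f" "L2 g" "L2 w"
  shows "ip (\<lambda>x. a * f x + b * g x) w = a * ip f w + b * ip g w"
proof -
  have "ip (\<lambda>x. a * f x + b * g x) w = (LINT x:{0..1}|lebesgue. a * (f x * cnj (w x)) + b * (g x * cnj (w x)))"
    unfolding ip_def by (simp add: algebra_simps)
  also have "\<dots> = (LINT x:{0..1}|lebesgue. a * (f x * cnj (w x))) + (LINT x:{0..1}|lebesgue. b * (g x * cnj (w x)))"
    by (rule set_integral_add(2)) (auto intro!: set_integrable_mult_right L2_prod_int assms)
  also have "\<dots> = a * ip f w + b * ip g w"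
    unfolding ip_def by (simp add: set_integral_mult_right)
  finally show ?thesis .
qed

lemma ip_lin2:
  assumes "L2 f" "L2 g" "L2 w"
  shows "ip w (\<lambda>x. a * f x + b * g x) = cnj a * ip w f + cnj b * ip w g"
proof -
  have "ip w (\<lambda>x. a * f x + b * g x) = (LINT x:{0..1}|lebesgue. cnj a * (w x * cnj (f x)) + cnj b * (w x * cnj (g x)))"
    unfolding ip_def by (simp add: algebra_simps)
  also have "\<dots> = (LINT x:{0..1}|lebesgue. cnj a * (w x * cnj (f x))) + (LINT x:{0..1}|lebesgue. cnj b * (w x * cnj (g x)))"
    by (rule set_integral_add(2)) (auto intro!: set_integrable_mult_right L2_prod_int assms)
  also have "\<dots> = cnj a * ip w f + cnj b * ip w g"
    unfolding ip_def by (simp add: set_integral_mult_right)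
  finally show ?thesis .
qed

lemma ip_cnj: "cnj (ip f g) = ip g f"
proof -
  have "cnj (ip f g) = integral\<^sup>L lebesgue (\<lambda>x. cnj (indicator {0..1} x *\<^sub>R (f x * cnj (g x))))"
    unfolding ip_def set_lebesgue_integral_def by (rule Bochner_Integration.integral_cnj[symmetric])
  also have "\<dots> = ip g f"
    unfolding ip_def set_lebesgue_integral_def by (intro Bochner_Integration.integral_cong) (auto simp: indicator_def)
  finally show ?thesis .
qed

lemma alg:
  fixes E F q a p1 p2 w v1 v2 b :: complex
  assumes "E * F = 1" "q = E * (a - \<i> * p1) - \<i> * p2"
  shows "\<i> * w + v1 * (a - \<i> / 2 * p1) + v2 * (q + \<i> / 2 * p2) - (\<i> * w + (v1 + E * v2) * (a - \<i> / 2 * (p1 + F * p2)) + 0 * b) = \<i> / 2 * F * v1 * p2 - \<i> / 2 * E * v2 * p1"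
  using assms by algebra


definition N01 :: "(real \<Rightarrow> complex) \<Rightarrow> real" where
  "N01 f = (LINT x:{0..1}|lebesgue. (cmod (f x))^2)"

lemma N01_nonneg: "0 \<le> N01 f"
  unfolding N01_def set_lebesgue_integral_def
  by (rule integral_nonneg_AE) (auto simp: indicator_def)

lemma L2norm_N01: "L2norm f = sqrt (N01 f)"
  by (simp add: L2norm_def N01_def)

lemma L2_sqint: "L2 f \<Longrightarrow> set_integrable lebesgue {0..1} (\<lambda>x. (cmod (f x))^2)"
  by (simp add: L2_def)

lemma pt_bound: "(cmod (u + w))^2 \<le> 2 * (cmod u)^2 + 2 * (cmod w)^2"
proof -
  have "cmod (u + w) \<le> cmod u + cmod w" by (rule norm_triangle_ineq)
  then have "(cmod (u + w))^2 \<le> (cmod u + cmod w)^2" by (simp add: power_mono)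
  also have "\<dots> \<le> 2 * (cmod u)^2 + 2 * (cmod w)^2"
    using sum_squares_bound[of "cmod u" "cmod w"] by (simp add: power2_eq_square algebra_simps)
  finally show ?thesis .
qed

lemma N01_lin:
  assumes "L2 f" "L2 g"
  shows "N01 (\<lambda>x. a * f x + b * g x) \<le> 2 * (cmod a)^2 * N01 f + 2 * (cmod b)^2 * N01 g"
proof -
  have "N01 (\<lambda>x. a * f x + b * g x) \<le> (LINT x:{0..1}|lebesgue. 2 * (cmod a)^2 * (cmod (f x))^2 + 2 * (cmod b)^2 * (cmod (g x))^2)"
    unfolding N01_def
  proof (rule set_integral_mono)
    show "set_integrable lebesgue {0..1} (\<lambda>x. (cmod (a * f x + b * g x))^2)"
      by (rule L2_sqint[OF L2_lin[OF assms]])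
    show "set_integrable lebesgue {0..1} (\<lambda>x. 2 * (cmod a)^2 * (cmod (f x))^2 + 2 * (cmod b)^2 * (cmod (g x))^2)"
      using L2_sqint[OF assms(1)] L2_sqint[OF assms(2)] by auto
    fix x
    show "(cmod (a * f x + b * g x))^2 \<le> 2 * (cmod a)^2 * (cmod (f x))^2 + 2 * (cmod b)^2 * (cmod (g x))^2"
      using pt_bound[of "a * f x" "b * g x"] by (simp add: norm_mult power_mult_distrib)
  qed
  also have "\<dots> = 2 * (cmod a)^2 * N01 f + 2 * (cmod b)^2 * N01 g"
    unfolding N01_def
    using L2_sqint[OF assms(1)] L2_sqint[OF assms(2)]
    by (subst set_integral_add) auto
  finally show ?thesis .
qed

lemma ip_bound:
  assumes "L2 f" "L2 w"
  shows "cmod (ip f w) \<le> (1 + N01 w) / 2 * L2norm f"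
proof -
  have key: "cmod (ip f w) \<le> (t * N01 f + N01 w / t) / 2" if t: "t > 0" for t
  proof -
    have "cmod (ip f w) \<le> (LINT x:{0..1}|lebesgue. norm (f x * cnj (w x)))"
      unfolding ip_def by (rule set_integral_norm_bound[OF L2_prod_int[OF assms]])
    also have "\<dots> \<le> (LINT x:{0..1}|lebesgue. (t * (cmod (f x))^2 + (cmod (w x))^2 / t) / 2)"
    proof (rule set_integral_mono)
      show "set_integrable lebesgue {0..1} (\<lambda>x. norm (f x * cnj (w x)))"
        by (rule set_integrable_norm[OF L2_prod_int[OF assms]])
      show "set_integrable lebesgue {0..1} (\<lambda>x. (t * (cmod (f x))^2 + (cmod (w x))^2 / t) / 2)"
        using L2_sqint[OF assms(1)] L2_sqint[OF assms(2)] by (intro set_integrable_divide set_integral_add set_integrable_mult_right) auto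
      fix x
      have "0 \<le> (t * cmod (f x) - cmod (w x))^2" by simp
      then have "2 * t * (cmod (f x) * cmod (w x)) \<le> t * (t * (cmod (f x))^2) + (cmod (w x))^2"
        by (simp add: power2_eq_square algebra_simps)
      then have "cmod (f x) * cmod (w x) \<le> (t * (cmod (f x))^2 + (cmod (w x))^2 / t) / 2"
        using t by (simp add: field_simps power2_eq_square)
      then show "norm (f x * cnj (w x)) \<le> (t * (cmod (f x))^2 + (cmod (w x))^2 / t) / 2"
        by (simp add: norm_mult)
    qed
    also have "\<dots> = (t * N01 f + N01 w / t) / 2"
      unfolding N01_def
      using L2_sqint[OF assms(1)] L2_sqint[OF assms(2)]
      by (subst set_integral_divide_zero, subst set_integral_add) auto
    finally show ?thesis .
  qed
  show ?thesis
  proof (cases "N01 f = 0")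
    case True
    have "cmod (ip f w) = 0"
    proof (rule ccontr)
      assume "cmod (ip f w) \<noteq> 0"
      then have c: "cmod (ip f w) > 0" by simp
      define t where "t = (N01 w + 1) / cmod (ip f w)"
      have tp: "t > 0" unfolding t_def using c N01_nonneg[of w] by simp
      have "cmod (ip f w) \<le> N01 w / t / 2" using key[OF tp] True by simp
      also have "\<dots> = N01 w * cmod (ip f w) / (N01 w + 1) / 2"
        unfolding t_def using c N01_nonneg[of w] by (simp add: field_simps)
      also have "\<dots> < cmod (ip f w)"
      proof -
        have "0 < N01 w * cmod (ip f w) + 2 * cmod (ip f w)" using c N01_nonneg[of w] by (intro add_nonneg_pos mult_nonneg_nonneg) auto
        then show ?thesis using c N01_nonneg[of w] by (simp add: field_simps)
      qed
      finally show False by simp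
    qed
    then show ?thesis using N01_nonneg[of w] N01_nonneg[of f] by (simp add: L2norm_N01)
  next
    case False
    then have p: "N01 f > 0" using N01_nonneg[of f] by simp
    define s where "s = sqrt (N01 f)"
    have sp: "s > 0" unfolding s_def using p by simp
    have Nf: "N01 f = s^2" unfolding s_def using p by simp
    have "cmod (ip f w) \<le> ((1 / s) * N01 f + N01 w / (1 / s)) / 2"
      by (rule key) (simp add: sp)
    also have "\<dots> = (1 + N01 w) / 2 * s"
      unfolding Nf using sp by (simp add: field_simps power2_eq_square)
    finally show ?thesis by (simp add: L2norm_N01 s_def)
  qed
qed

lemma cont_L2:
  assumes "continuous_on {0..1} f"
  shows "L2 f"
proof -
  have "f absolutely_integrable_on {0..1}" by (rule absolutely_integrable_continuous_real[OF assms])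
  then have "integrable lebesgue (\<lambda>x. indicator {0..1} x *\<^sub>R f x)" by (simp add: set_integrable_def)
  then have m: "set_borel_measurable lebesgue {0..1} f"
    unfolding set_borel_measurable_def by (rule borel_measurable_integrable)
  have "continuous_on {0..1} (\<lambda>x. (cmod (f x))^2)" by (intro continuous_intros assms)
  then have "(\<lambda>x. (cmod (f x))^2) absolutely_integrable_on {0..1}" by (rule absolutely_integrable_continuous_real)
  then show ?thesis using m unfolding L2_def by simp
qed

lemma W21_L2:
  assumes "W21 \<psi>"
  shows "L2 \<psi>"
proof -
  obtain g where g: "L2 g" and h: "\<forall>x\<in>{0..1}. \<psi> x = \<psi> 0 + (LINT t:{0..x}|lebesgue. g t)"
    using assms unfolding W21_def is_wderiv_def by blast
  have one: "L2 (\<lambda>_. 1)" by (rule cont_L2) simp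
  have gi: "set_integrable lebesgue {0..1} g"
    using L2_prod_int[OF g one] by simp
  have gion: "g integrable_on {0..1}" by (rule set_lebesgue_integral_eq_integral(1)[OF gi])
  have h2: "\<psi> x = \<psi> 0 + integral {0..x} g" if "x \<in> {0..1}" for x :: real
  proof -
    have "set_integrable lebesgue {0..x} g"
      by (rule set_integrable_subset[OF gi]) (use that in auto)
    then have e: "(LINT t:{0..x}|lebesgue. g t) = integral {0..x} g" by (rule set_lebesgue_integral_eq_integral(2))
    have "\<psi> x = \<psi> 0 + (LINT t:{0..x}|lebesgue. g t)" using h that by blast
    then show ?thesis unfolding e .
  qed
  have "continuous_on {0..1} (\<lambda>x. \<psi> 0 + integral {0..x} g)"
    by (intro continuous_on_add continuous_on_const indefinite_integral_continuous_1 gion)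
  then have "continuous_on {0..1} \<psi>"
  proof (rule continuous_on_eq)
    fix x :: real assume "x \<in> {0..1}"
    then show "\<psi> 0 + integral {0..x} g = \<psi> x" by (rule h2[symmetric])
  qed
  then show ?thesis by (rule cont_L2)
qed


lemma alg2:
  fixes E F a p1 p2 :: complex
  assumes "E * F = 1"
  shows "E * (a - \<i> * (p1 + F * p2)) = E * (a - \<i> * p1) - \<i> * p2"
  using assms by algebra

theorem theorem5p2:
  fixes v1 v2 v :: "real \<Rightarrow> complex" and \<alpha> :: real
  assumes "L2 v1" and "L2 v2"
    and "0 \<le> \<alpha>" and "\<alpha> < 2 * pi"
    and "v = (\<lambda>x. v1 x + exp (\<i> * complex_of_real \<alpha>) * v2 x)"
  defines "B \<equiv> (\<lambda>\<psi> x. \<i> / 2 * exp (- \<i> * complex_of_real \<alpha>) * v1 x * ip \<psi> v2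
                     - \<i> / 2 * exp (\<i> * complex_of_real \<alpha>) * v2 x * ip \<psi> v1)"
  shows "Adom v1 v2 \<alpha> = Adom v (\<lambda>_. 0) \<alpha>
    \<and> (\<forall>\<psi>\<in>Adom v1 v2 \<alpha>. \<forall>x\<in>{0..1}. Aop v1 v2 \<alpha> \<psi> x - Aop v (\<lambda>_. 0) \<alpha> \<psi> x = B \<psi> x)
    \<and> bounded_L2op B \<and> selfadjoint_L2op B \<and> rank_le_L2op B 2"
proof -
  let ?E = "exp (\<i> * complex_of_real \<alpha>)"
  let ?F = "exp (- \<i> * complex_of_real \<alpha>)"
  have EF: "?E * ?F = 1" by (simp add: exp_add[symmetric])
  have cE: "cnj ?E = ?F" by (simp add: exp_cnj)
  have cF: "cnj ?F = ?E" by (simp add: exp_cnj)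
  have cF': "cnj (exp (- (\<i> * complex_of_real \<alpha>))) = ?E" by (simp add: exp_cnj)
  have ipv: "ip \<psi> v = ip \<psi> v1 + ?F * ip \<psi> v2" if "L2 \<psi>" for \<psi>
  proof -
    have "ip \<psi> v = ip \<psi> (\<lambda>x. 1 * v1 x + ?E * v2 x)" by (simp add: assms(5))
    also have "\<dots> = cnj 1 * ip \<psi> v1 + cnj ?E * ip \<psi> v2" by (rule ip_lin2[OF assms(1,2) that])
    finally show ?thesis by (simp only: cE complex_cnj_one mult_1)
  qed
  have ip0: "ip \<psi> (\<lambda>_. 0) = 0" for \<psi> by (simp add: ip_def)
  have dom: "Adom v1 v2 \<alpha> = Adom v (\<lambda>_. 0) \<alpha>"
  proof (rule set_eqI)
    fix \<psi>
    show "\<psi> \<in> Adom v1 v2 \<alpha> \<longleftrightarrow> \<psi> \<in> Adom v (\<lambda>_. 0) \<alpha>"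
    proof (cases "W21 \<psi>")
      case True
      then have L: "L2 \<psi>" by (rule W21_L2)
      have "?E * (\<psi> 0 - \<i> * ip \<psi> v) = ?E * (\<psi> 0 - \<i> * ip \<psi> v1) - \<i> * ip \<psi> v2"
        unfolding ipv[OF L] by (rule alg2[OF EF])
      note e = this
      show ?thesis unfolding Adom_def mem_Collect_eq ip0 e using True by (simp add: eq_diff_eq)
    next
      case False
      then show ?thesis unfolding Adom_def by simp
    qed
  qed
  have diff: "\<forall>\<psi>\<in>Adom v1 v2 \<alpha>. \<forall>x\<in>{0..1}. Aop v1 v2 \<alpha> \<psi> x - Aop v (\<lambda>_. 0) \<alpha> \<psi> x = B \<psi> x"
  proof (intro ballI)
    fix \<psi> and x :: real
    assume d: "\<psi> \<in> Adom v1 v2 \<alpha>"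
    then have L: "L2 \<psi>" unfolding Adom_def by (auto intro: W21_L2)
    have q: "\<psi> 1 = ?E * (\<psi> 0 - \<i> * ip \<psi> v1) - \<i> * ip \<psi> v2"
      using d unfolding Adom_def by (simp add: algebra_simps)
    show "Aop v1 v2 \<alpha> \<psi> x - Aop v (\<lambda>_. 0) \<alpha> \<psi> x = B \<psi> x"
      unfolding Aop_def B_def ipv[OF L] ip0
      unfolding assms(5)
      by (rule alg[OF EF q])
  qed
  have Bform: "B \<psi> = (\<lambda>x. (\<i> / 2 * ?F * ip \<psi> v2) * v1 x + (- (\<i> / 2 * ?E * ip \<psi> v1)) * v2 x)" for \<psi>
    unfolding B_def by (simp add: fun_eq_iff algebra_simps)
  have BL2: "L2 (B \<psi>)" for \<psi>
    unfolding Bform by (rule L2_lin[OF assms(1,2)])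
  have Blin: "\<forall>x\<in>{0..1}. B (\<lambda>y. a * \<psi> y + b * \<phi> y) x = a * B \<psi> x + b * B \<phi> x"
    if "L2 \<psi>" "L2 \<phi>" for \<psi> \<phi> a b
    unfolding B_def ip_lin1[OF that assms(2)] ip_lin1[OF that assms(1)]
    by (intro ballI) algebra
  define K1 where "K1 = (1 + N01 v1) / 2"
  define K2 where "K2 = (1 + N01 v2) / 2"
  define C where "C = sqrt ((K2^2 * N01 v1 + K1^2 * N01 v2) / 2)"
  have Bbound: "L2norm (B \<psi>) \<le> C * L2norm \<psi>" if L: "L2 \<psi>" for \<psi>
  proof -
    let ?L = "L2norm \<psi>"
    have Lnn: "0 \<le> ?L" by (simp add: L2norm_N01 N01_nonneg)
    have h1: "cmod (ip \<psi> v1) \<le> K1 * ?L" unfolding K1_def by (rule ip_bound[OF L assms(1)])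
    have h2: "cmod (ip \<psi> v2) \<le> K2 * ?L" unfolding K2_def by (rule ip_bound[OF L assms(2)])
    have s1: "(cmod (ip \<psi> v1))^2 \<le> (K1 * ?L)^2" by (rule power_mono[OF h1 norm_ge_zero])
    have s2: "(cmod (ip \<psi> v2))^2 \<le> (K2 * ?L)^2" by (rule power_mono[OF h2 norm_ge_zero])
    have c1: "cmod (\<i> / 2 * ?F * ip \<psi> v2) = cmod (ip \<psi> v2) / 2" by (simp add: norm_mult norm_divide)
    have c2: "cmod (- (\<i> / 2 * ?E * ip \<psi> v1)) = cmod (ip \<psi> v1) / 2" by (simp add: norm_mult norm_divide)
    have "N01 (B \<psi>) \<le> 2 * (cmod (\<i> / 2 * ?F * ip \<psi> v2))^2 * N01 v1 + 2 * (cmod (- (\<i> / 2 * ?E * ip \<psi> v1)))^2 * N01 v2"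
      unfolding Bform by (rule N01_lin[OF assms(1,2)])
    also have "\<dots> = (cmod (ip \<psi> v2))^2 * N01 v1 / 2 + (cmod (ip \<psi> v1))^2 * N01 v2 / 2"
      unfolding c1 c2 by (simp add: power_divide)
    also have "\<dots> \<le> (K2 * ?L)^2 * N01 v1 / 2 + (K1 * ?L)^2 * N01 v2 / 2"
      using s1 s2 N01_nonneg[of v1] N01_nonneg[of v2]
      by (intro add_mono divide_right_mono mult_right_mono) auto
    also have "\<dots> = C^2 * ?L^2"
    proof -
      have "0 \<le> (K2^2 * N01 v1 + K1^2 * N01 v2) / 2"
        using N01_nonneg[of v1] N01_nonneg[of v2] by simp
      then have C2: "C^2 = (K2^2 * N01 v1 + K1^2 * N01 v2) / 2"
        unfolding C_def by (rule real_sqrt_pow2)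
      show ?thesis unfolding C2 by (simp add: power_mult_distrib field_simps)
    qed
    finally have "N01 (B \<psi>) \<le> (C * ?L)^2" by (simp add: power_mult_distrib)
    then have "sqrt (N01 (B \<psi>)) \<le> sqrt ((C * ?L)^2)" by (rule real_sqrt_le_mono)
    also have "\<dots> = C * ?L"
    proof -
      have "0 \<le> (K2^2 * N01 v1 + K1^2 * N01 v2) / 2"
        using N01_nonneg[of v1] N01_nonneg[of v2] by (intro divide_nonneg_pos add_nonneg_nonneg mult_nonneg_nonneg) auto
      then have "0 \<le> C" unfolding C_def by simp
      then show ?thesis using Lnn by (simp add: real_sqrt_abs)
    qed
    finally show ?thesis by (simp add: L2norm_N01)
  qed
  have bnd: "bounded_L2op B"
    unfolding bounded_L2op_def using BL2 Blin Bbound by blast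
  have sa: "selfadjoint_L2op B"
    unfolding selfadjoint_L2op_def
  proof (intro allI impI)
    fix \<psi> \<phi> assume L: "L2 \<psi>" "L2 \<phi>"
    show "ip (B \<psi>) \<phi> = ip \<psi> (B \<phi>)"
      unfolding Bform ip_lin1[OF assms(1,2) L(2)] ip_lin2[OF assms(1,2) L(1)]
      by (simp add: cE cF cF' ip_cnj algebra_simps)
  qed
  have rk: "rank_le_L2op B 2"
    unfolding rank_le_L2op_def
  proof (intro exI[of _ "[v1, v2]"] conjI allI impI)
    fix \<psi> :: "real \<Rightarrow> complex" assume "L2 \<psi>"
    show "\<exists>cs. length cs = length [v1, v2] \<and> (AE x in lebesgue. x \<in> {0..1} \<longrightarrow> B \<psi> x = (\<Sum>i<length [v1, v2]. cs ! i * ([v1, v2] ! i) x))"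
      by (rule exI[of _ "[\<i> / 2 * ?F * ip \<psi> v2, - (\<i> / 2 * ?E * ip \<psi> v1)]"])
         (simp add: Bform numeral_2_eq_2 lessThan_Suc)
  qed simp
  show ?thesis using dom diff bnd sa rk by blast
qed

end
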